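(* Let $\alpha\neq 0$ be a real number and let $S$ be an $\alpha$-singular maximal surface of $\mathbb L^3$ which is invariant under the one-parameter group of translations $\{p\mapsto p+t\vec v: t\in\mathbb R\}$ generated by a unit vector $\vec v$, so that $S$ is parametrized as $X(s,t)=\gamma(s)+t\vec v$ with generatrix $\gamma$ a planar spacelike curve with nonzero curvature, contained in a plane orthogonal to $\vec v$ (the unit normal of $S$ being taken as the normal $\mathbf n=\gamma'\times\vec v$ of $\gamma$). Then $\vec v$ is horizontal (i.e. parallel to the $xy$-plane), $\gamma$ is contained in a (vertical) plane orthogonal to $\vec v$, and $\gamma$, viewed as a planar curve of this plane identified with $\mathbb L^2$ (with the $z$-axis of $\mathbb L^3$ corresponding to the $y$-axis of $\mathbb L^2$), satisfies $$\kappa=-\alpha\frac{\langle \mathbf n,(0,1)\rangle}{y}.$$ Conversely, if $\gamma$ is a curve in $\mathbb L^2$ satisfying this equation and it is embedded in the $xz$-plane of $\mathbb L^3$ (identifying $\mathbb L^2$ with the $xz$-plane, its $y$-axis with the $z$-axis), then the surface $X(s,t)=\gamma(s)+t(0,1,0)$ is an $\alpha$-singular maximal surface.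
   Context: $\mathbb L^3$ is $\mathbb R^3$ with the Lorentzian metric $\langle\cdot,\cdot\rangle=dx^2+dy^2-dz^2$; $\mathbb L^2$ is $\mathbb R^2$ with metric $dx^2-dy^2$. A surface is spacelike if its induced metric is Riemannian; its unit normal $N$ is then timelike. The mean curvature $H$ is the trace of the second fundamental form (sum of principal curvatures) with respect to $N$. For $\alpha\neq0$, an $\alpha$-singular maximal surface is a spacelike surface $S$ in the halfspace $z>0$ satisfying $H(p)=\alpha\frac{\langle N(p),\vec a\rangle}{\langle p,\vec a\rangle}=-\alpha\frac{\langle N(p),\vec a\rangle}{z}$ for all $p\in S$, where $\vec a=(0,0,1)$ and $N$ is a unit normal field. For a spacelike curve $\gamma$ in the halfplane $y>0$ of $\mathbb L^2$ parametrized by arc length, the curvature $\kappa\neq0$ is defined by $\gamma''=\kappa\,\mathbf n$, where $\mathbf n$ is a unit (timelike) normal vector. *)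

theory Defs
  imports "HOL-Analysis.Analysis"
begin

definition linner :: "real^3 \<Rightarrow> real^3 \<Rightarrow> real" where
  "linner u w = u$1 * w$1 + u$2 * w$2 - u$3 * w$3"

definition linner2 :: "real^2 \<Rightarrow> real^2 \<Rightarrow> real" where
  "linner2 p q = p$1 * q$1 - p$2 * q$2"

text \<open>Lorentzian cross product: linner (lcross u w) u = 0 = linner (lcross u w) w.\<close>
definition lcross :: "real^3 \<Rightarrow> real^3 \<Rightarrow> real^3" where
  "lcross u w = vector [u$2 * w$3 - u$3 * w$2, u$3 * w$1 - u$1 * w$3, -(u$1 * w$2 - u$2 * w$1)]"

definition avec :: "real^3" where "avec = vector [0, 0, 1]"

definition d1 :: "(real \<Rightarrow> 'b::real_normed_vector) \<Rightarrow> real \<Rightarrow> 'b" where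
  "d1 f x = vector_derivative f (at x)"

definition Xs :: "(real \<Rightarrow> real \<Rightarrow> real^3) \<Rightarrow> real \<Rightarrow> real \<Rightarrow> real^3" where
  "Xs X s t = vector_derivative (\<lambda>s'. X s' t) (at s)"
definition Xt :: "(real \<Rightarrow> real \<Rightarrow> real^3) \<Rightarrow> real \<Rightarrow> real \<Rightarrow> real^3" where
  "Xt X s t = vector_derivative (\<lambda>t'. X s t') (at t)"
definition Xss :: "(real \<Rightarrow> real \<Rightarrow> real^3) \<Rightarrow> real \<Rightarrow> real \<Rightarrow> real^3" where
  "Xss X s t = vector_derivative (\<lambda>s'. Xs X s' t) (at s)"
definition Xst :: "(real \<Rightarrow> real \<Rightarrow> real^3) \<Rightarrow> real \<Rightarrow> real \<Rightarrow> real^3" where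
  "Xst X s t = vector_derivative (\<lambda>t'. Xs X s t') (at t)"
definition Xtt :: "(real \<Rightarrow> real \<Rightarrow> real^3) \<Rightarrow> real \<Rightarrow> real \<Rightarrow> real^3" where
  "Xtt X s t = vector_derivative (\<lambda>t'. Xt X s t') (at t)"

text \<open>Mean curvature H of the parametrized surface X with respect to the unit
  (timelike) normal N: the mean curvature vector is the trace of the second fundamental
  form sigma(u,w) = (normal part of D_u w) = - linner (D_u w) N * N, and H is defined by
  (mean curvature vector) = H N.\<close>
definition mean_curv :: "(real \<Rightarrow> real \<Rightarrow> real^3) \<Rightarrow> (real \<Rightarrow> real \<Rightarrow> real^3) \<Rightarrow> real \<Rightarrow> real \<Rightarrow> real" where
  "mean_curv X N s t =
    (let E = linner (Xs X s t) (Xs X s t); F = linner (Xs X s t) (Xt X s t);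
         G = linner (Xt X s t) (Xt X s t);
         e = linner (N s t) (Xss X s t); f = linner (N s t) (Xst X s t);
         g = linner (N s t) (Xtt X s t)
     in - (e * G - 2 * f * F + g * E) / (E * G - F^2))"

definition spacelike_surface ::
  "(real \<Rightarrow> real \<Rightarrow> real^3) \<Rightarrow> (real \<Rightarrow> real \<Rightarrow> real^3) \<Rightarrow> (real \<times> real) set \<Rightarrow> bool" where
  "spacelike_surface X N U \<longleftrightarrow> open U \<and>
     continuous_on U (\<lambda>(s,t). N s t) \<and>
     (\<forall>(s,t)\<in>U.
        (\<lambda>s'. X s' t) differentiable (at s) \<and> (\<lambda>t'. X s t') differentiable (at t) \<and>
        (\<lambda>s'. Xs X s' t) differentiable (at s) \<and> (\<lambda>t'. Xs X s t') differentiable (at t) \<and>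
        (\<lambda>t'. Xt X s t') differentiable (at t) \<and>
        linner (Xs X s t) (Xs X s t) > 0 \<and> linner (Xt X s t) (Xt X s t) > 0 \<and>
        linner (Xs X s t) (Xs X s t) * linner (Xt X s t) (Xt X s t)
          - (linner (Xs X s t) (Xt X s t))^2 > 0 \<and>
        linner (N s t) (N s t) = -1 \<and>
        linner (N s t) (Xs X s t) = 0 \<and> linner (N s t) (Xt X s t) = 0)"

definition alpha_singular_maximal ::
  "real \<Rightarrow> (real \<Rightarrow> real \<Rightarrow> real^3) \<Rightarrow> (real \<Rightarrow> real \<Rightarrow> real^3) \<Rightarrow> (real \<times> real) set \<Rightarrow> bool" where
  "alpha_singular_maximal \<alpha> X N U \<longleftrightarrow> spacelike_surface X N U \<and>
     (\<forall>(s,t)\<in>U. (X s t)$3 > 0 \<and>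
        mean_curv X N s t = \<alpha> * linner (N s t) avec / linner (X s t) avec)"

end

theory Submission
  imports Defs
begin


lemma lin_vd:
  fixes L :: "'a::euclidean_space \<Rightarrow> 'b::real_normed_vector" and f :: "real \<Rightarrow> 'a"
  assumes "linear L" "(f has_vector_derivative f') (at x)"
  shows "((\<lambda>s. L (f s)) has_vector_derivative L f') (at x)"
proof -
  have "bounded_linear L" using assms(1) by (simp add: linear_conv_bounded_linear)
  then show ?thesis by (rule bounded_linear.has_vector_derivative[OF _ assms(2)])
qed

lemma linL: "linear (\<lambda>x::real^3. vector [linner x w, x$3] :: real^2)"
  by (rule linearI) (auto simp: vec_eq_iff forall_2 linner_def algebra_simps)

lemma linM: "linear (\<lambda>x::real^2. vector [x$1, 0, x$2] :: real^3)"
  by (rule linearI) (auto simp: vec_eq_iff forall_3)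

lemma linK: "linear (\<lambda>x::real^2. vector [x$2, 0, x$1] :: real^3)"
  by (rule linearI) (auto simp: vec_eq_iff forall_3)

lemma cross_norm: "linner (lcross u w) (lcross u w) = - (linner u u * linner w w - (linner u w)^2)"
  by (simp add: linner_def lcross_def power2_eq_square algebra_simps)

lemma cross_orth1: "linner (lcross u w) u = 0" and cross_orth2: "linner (lcross u w) w = 0"
  by (simp_all add: linner_def lcross_def algebra_simps)

lemma linner_scaleR: "linner x (c *\<^sub>R y) = c * linner x y"
  by (simp add: linner_def algebra_simps)

lemma vd_open:
  assumes "(f has_vector_derivative f') (at x)" "open S" "x \<in> S" "\<And>y. y \<in> S \<Longrightarrow> f y = g y"
  shows "vector_derivative g (at x) = f'" "g differentiable (at x)"
proof -
  have g: "(g has_vector_derivative f') (at x)" by (rule has_vector_derivative_transform_within_open[OF assms])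
  show "vector_derivative g (at x) = f'" using g by (rule vector_derivative_at)
  show "g differentiable (at x)" using g by (rule differentiableI_vector)
qed


theorem proposition2p1:
  fixes \<alpha> :: real
  assumes "\<alpha> \<noteq> 0"
  shows
   "(\<forall>(\<gamma>::real \<Rightarrow> real^3) (v::real^3) (\<kappa>::real \<Rightarrow> real) (a::real) (b::real).
      a < b \<and>
      \<bar>linner v v\<bar> = 1 \<and>
      (\<forall>s\<in>{a<..<b}. \<gamma> differentiable (at s) \<and> d1 \<gamma> differentiable (at s) \<and>
                     linner (d1 \<gamma> s) (d1 \<gamma> s) = 1) \<and>
      (\<exists>c. \<forall>s\<in>{a<..<b}. linner (\<gamma> s) v = c) \<and>
      (\<forall>s\<in>{a<..<b}. d1 (d1 \<gamma>) s = \<kappa> s *\<^sub>R lcross (d1 \<gamma> s) v \<and> \<kappa> s \<noteq> 0) \<and>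
      alpha_singular_maximal \<alpha> (\<lambda>s t. \<gamma> s + t *\<^sub>R v) (\<lambda>s t. lcross (d1 \<gamma> s) v)
        ({a<..<b} \<times> UNIV)
    \<longrightarrow>
      v$3 = 0 \<and>
      (\<exists>c. \<forall>s\<in>{a<..<b}. linner (\<gamma> s) v = c) \<and>
      (\<exists>w::real^3. w$3 = 0 \<and> linner w w = 1 \<and> linner w v = 0 \<and>
         (let \<beta> = (\<lambda>s. vector [linner (\<gamma> s) w, (\<gamma> s)$3] :: real^2);
              n = (\<lambda>s. vector [linner (lcross (d1 \<gamma> s) v) w, (lcross (d1 \<gamma> s) v)$3] :: real^2)
          in \<forall>s\<in>{a<..<b}.
               linner2 (d1 \<beta> s) (d1 \<beta> s) = 1 \<and>
               linner2 (n s) (n s) = -1 \<and> linner2 (n s) (d1 \<beta> s) = 0 \<and>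
               d1 (d1 \<beta>) s = \<kappa> s *\<^sub>R n s \<and> (\<beta> s)$2 > 0 \<and>
               \<kappa> s = - \<alpha> * linner2 (n s) (vector [0, 1]) / (\<beta> s)$2)))
   \<and>
   (\<forall>(\<beta>::real \<Rightarrow> real^2) (n::real \<Rightarrow> real^2) (\<kappa>::real \<Rightarrow> real) (a::real) (b::real).
      a < b \<and>
      (\<forall>s\<in>{a<..<b}. \<beta> differentiable (at s) \<and> d1 \<beta> differentiable (at s) \<and>
         linner2 (d1 \<beta> s) (d1 \<beta> s) = 1 \<and> (\<beta> s)$2 > 0 \<and>
         linner2 (n s) (n s) = -1 \<and> linner2 (n s) (d1 \<beta> s) = 0 \<and>
         d1 (d1 \<beta>) s = \<kappa> s *\<^sub>R n s \<and> \<kappa> s \<noteq> 0 \<and>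
         \<kappa> s = - \<alpha> * linner2 (n s) (vector [0, 1]) / (\<beta> s)$2)
    \<longrightarrow>
      (\<exists>N. alpha_singular_maximal \<alpha>
              (\<lambda>s t. vector [(\<beta> s)$1, 0, (\<beta> s)$2] + t *\<^sub>R vector [0, 1, 0]) N
              ({a<..<b} \<times> UNIV)))"
proof (intro conjI allI impI)
  fix \<gamma> :: "real \<Rightarrow> real^3" and v :: "real^3" and \<kappa> :: "real \<Rightarrow> real" and a b :: real
  assume H: "a < b \<and>
      \<bar>linner v v\<bar> = 1 \<and>
      (\<forall>s\<in>{a<..<b}. \<gamma> differentiable (at s) \<and> d1 \<gamma> differentiable (at s) \<and>
                     linner (d1 \<gamma> s) (d1 \<gamma> s) = 1) \<and>
      (\<exists>c. \<forall>s\<in>{a<..<b}. linner (\<gamma> s) v = c) \<and>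
      (\<forall>s\<in>{a<..<b}. d1 (d1 \<gamma>) s = \<kappa> s *\<^sub>R lcross (d1 \<gamma> s) v \<and> \<kappa> s \<noteq> 0) \<and>
      alpha_singular_maximal \<alpha> (\<lambda>s t. \<gamma> s + t *\<^sub>R v) (\<lambda>s t. lcross (d1 \<gamma> s) v)
        ({a<..<b} \<times> UNIV)"
  define X where "X = (\<lambda>s t. \<gamma> s + t *\<^sub>R v)"
  define N where "N = (\<lambda>s (t::real). lcross (d1 \<gamma> s) v)"
  have ab: "a < b" and vv: "\<bar>linner v v\<bar> = 1"
    and gd: "\<And>s. s \<in> {a<..<b} \<Longrightarrow> \<gamma> differentiable (at s) \<and> d1 \<gamma> differentiable (at s) \<and>
                     linner (d1 \<gamma> s) (d1 \<gamma> s) = 1"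
    and cst: "\<exists>c. \<forall>s\<in>{a<..<b}. linner (\<gamma> s) v = c"
    and kap: "\<And>s. s \<in> {a<..<b} \<Longrightarrow> d1 (d1 \<gamma>) s = \<kappa> s *\<^sub>R lcross (d1 \<gamma> s) v \<and> \<kappa> s \<noteq> 0"
    and asm: "alpha_singular_maximal \<alpha> X N ({a<..<b} \<times> UNIV)"
    using H unfolding X_def N_def by blast+
  have Xs: "Xs X s t = d1 \<gamma> s" if "s \<in> {a<..<b}" for s t
  proof -
    have "(\<gamma> has_vector_derivative d1 \<gamma> s) (at s)"
    proof -
      have "\<gamma> differentiable (at s)" using gd[OF that] by blast
      from vector_derivative_works[THEN iffD1, OF this] show ?thesis by (simp only: d1_def)
    qed
    then have "((\<lambda>s'. \<gamma> s' + t *\<^sub>R v) has_vector_derivative d1 \<gamma> s + 0) (at s)"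
      by (intro has_vector_derivative_add) auto
    then show ?thesis unfolding Xs_def X_def by (simp add: vector_derivative_at)
  qed
  have Xt: "Xt X s t = v" for s t
  proof -
    have "((\<lambda>t'. \<gamma> s + t' *\<^sub>R v) has_vector_derivative v) (at t)"
      by (auto intro!: derivative_eq_intros)
    then show ?thesis unfolding Xt_def X_def by (simp add: vector_derivative_at)
  qed
  have Xss: "Xss X s t = d1 (d1 \<gamma>) s" if "s \<in> {a<..<b}" for s t
  proof -
    have "(d1 \<gamma> has_vector_derivative d1 (d1 \<gamma>) s) (at s)"
    proof -
      have "d1 \<gamma> differentiable (at s)" using gd[OF that] by blast
      from vector_derivative_works[THEN iffD1, OF this] show ?thesis by (simp only: d1_def[of "d1 \<gamma>"])
    qed
    from vd_open(1)[OF this open_greaterThanLessThan that, of "\<lambda>s'. Xs X s' t"] Xs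
    show ?thesis unfolding Xss_def by auto
  qed
  have Xst: "Xst X s t = 0" if "s \<in> {a<..<b}" for s t
    unfolding Xst_def Xs[OF that] by (simp add: vector_derivative_at)
  have Xtt: "Xtt X s t = 0" for s t
    unfolding Xtt_def Xt by (simp add: vector_derivative_at)
  have sp: "spacelike_surface X N ({a<..<b} \<times> UNIV)"
    and pos: "\<And>s t. s \<in> {a<..<b} \<Longrightarrow> (X s t)$3 > 0 \<and>
        mean_curv X N s t = \<alpha> * linner (N s t) avec / linner (X s t) avec"
  proof -
    have asmB: "\<forall>(s,t)\<in>{a<..<b} \<times> UNIV. (X s t)$3 > 0 \<and>
        mean_curv X N s t = \<alpha> * linner (N s t) avec / linner (X s t) avec"
      using asm unfolding alpha_singular_maximal_def by blast
    show "spacelike_surface X N ({a<..<b} \<times> UNIV)"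
      using asm unfolding alpha_singular_maximal_def by blast
    fix s t :: real assume "s \<in> {a<..<b}"
    then have "(s,t) \<in> {a<..<b} \<times> UNIV" by simp
    from bspec[OF asmB this] show "(X s t)$3 > 0 \<and>
        mean_curv X N s t = \<alpha> * linner (N s t) avec / linner (X s t) avec" by (simp only: prod.case)
  qed
  have sp2: "linner (Xt X s t) (Xt X s t) > 0 \<and> linner (N s t) (N s t) = -1" if "s \<in> {a<..<b}" for s t
  proof -
    have spB: "\<forall>(s,t)\<in>{a<..<b} \<times> UNIV. linner (Xt X s t) (Xt X s t) > 0 \<and> linner (N s t) (N s t) = -1"
      using sp unfolding spacelike_surface_def by blast
    have "(s,t) \<in> {a<..<b} \<times> UNIV" using that by simp
    from bspec[OF spB this] show ?thesis by (simp only: prod.case)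
  qed
  define s0 where "s0 = (a+b)/2"
  have s0: "s0 \<in> {a<..<b}" using ab unfolding s0_def by auto
  have v1: "linner v v = 1" using sp2[OF s0, of 0] vv Xt by auto
  have F0: "linner (d1 \<gamma> s) v = 0" if "s \<in> {a<..<b}" for s
  proof -
    have "linner (N s 0) (N s 0) = -1" using sp2[OF that] by auto
    then have "(linner (d1 \<gamma> s) v)^2 = 0"
      unfolding N_def cross_norm using v1 gd[OF that] by auto
    then show ?thesis by simp
  qed
  have v3: "v$3 = 0"
  proof (rule ccontr)
    assume ne: "v$3 \<noteq> 0"
    have "(X s0 (-(\<gamma> s0$3 + 1)/v$3))$3 > 0" using pos[OF s0] by blast
    then show False using ne unfolding X_def by (simp add: field_simps)
  qed
  have vv12: "(v$1)^2 + (v$2)^2 = 1" using v1 v3 unfolding linner_def by (simp add: power2_eq_square)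
  have H: "mean_curv X N s t = \<kappa> s" if "s \<in> {a<..<b}" for s t
  proof -
    have "linner (N s t) (Xss X s t) = \<kappa> s * linner (N s t) (N s t)"
      using Xss[OF that] kap[OF that] unfolding N_def by (simp add: linner_scaleR)
    then have "linner (N s t) (Xss X s t) = - \<kappa> s" using sp2[OF that, of t] by simp
    moreover have "linner (N s t) (Xst X s t) = 0" "linner (N s t) (Xtt X s t) = 0"
      using Xst[OF that] Xtt by (simp_all add: linner_def)
    ultimately show ?thesis unfolding mean_curv_def Let_def
      using Xs[OF that] Xt gd[OF that] F0[OF that] v1 by simp
  qed
  define w :: "real^3" where "w = vector [- v$2, v$1, 0]"
  define L where "L = (\<lambda>x::real^3. vector [linner x w, x$3] :: real^2)"
  have Lid: "linner2 (L x) (L y) = linner x y - linner x v * linner y v" for x y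
  proof -
    have "linner2 (L x) (L y) - (linner x y - linner x v * linner y v)
       = (x$1*y$1 + x$2*y$2) * (((v$1)^2 + (v$2)^2) - 1)"
      unfolding L_def w_def linner2_def linner_def using v3 by (simp add: power2_eq_square algebra_simps)
    then show ?thesis using vv12 by simp
  qed
  have Lind: "linear L" unfolding L_def by (rule linL)
  show "v$3 = 0" by (rule v3)
  show "\<exists>c. \<forall>s\<in>{a<..<b}. linner (\<gamma> s) v = c" by (rule cst)
  show "\<exists>w::real^3. w$3 = 0 \<and> linner w w = 1 \<and> linner w v = 0 \<and>
         (let \<beta> = (\<lambda>s. vector [linner (\<gamma> s) w, (\<gamma> s)$3] :: real^2);
              n = (\<lambda>s. vector [linner (lcross (d1 \<gamma> s) v) w, (lcross (d1 \<gamma> s) v)$3] :: real^2)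
          in \<forall>s\<in>{a<..<b}.
               linner2 (d1 \<beta> s) (d1 \<beta> s) = 1 \<and>
               linner2 (n s) (n s) = -1 \<and> linner2 (n s) (d1 \<beta> s) = 0 \<and>
               d1 (d1 \<beta>) s = \<kappa> s *\<^sub>R n s \<and> (\<beta> s)$2 > 0 \<and>
               \<kappa> s = - \<alpha> * linner2 (n s) (vector [0, 1]) / (\<beta> s)$2)"
  proof (intro exI[of _ w] conjI)
    show "w$3 = 0" unfolding w_def by simp
    show "linner w w = 1" unfolding w_def linner_def using vv12 by (simp add: power2_eq_square)
    show "linner w v = 0" unfolding w_def linner_def using v3 by (simp add: algebra_simps)
    have beq: "(\<lambda>s. vector [linner (\<gamma> s) w, (\<gamma> s)$3] :: real^2) = (\<lambda>s. L (\<gamma> s))"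
      unfolding L_def ..
    have neq: "(\<lambda>s. vector [linner (lcross (d1 \<gamma> s) v) w, (lcross (d1 \<gamma> s) v)$3] :: real^2)
       = (\<lambda>s. L (lcross (d1 \<gamma> s) v))"
      unfolding L_def ..
    have db: "d1 (\<lambda>s. L (\<gamma> s)) s = L (d1 \<gamma> s)" if "s \<in> {a<..<b}" for s
    proof -
      have "(\<gamma> has_vector_derivative d1 \<gamma> s) (at s)"
      proof -
      have "\<gamma> differentiable (at s)" using gd[OF that] by blast
      from vector_derivative_works[THEN iffD1, OF this] show ?thesis by (simp only: d1_def)
    qed
      from lin_vd[OF Lind this] show ?thesis unfolding d1_def[of "\<lambda>s. L (\<gamma> s)"]
        by (simp add: vector_derivative_at)
    qed
    have ddb: "d1 (d1 (\<lambda>s. L (\<gamma> s))) s = \<kappa> s *\<^sub>R L (lcross (d1 \<gamma> s) v)" if "s \<in> {a<..<b}" for s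
    proof -
      have "(d1 \<gamma> has_vector_derivative d1 (d1 \<gamma>) s) (at s)"
      proof -
      have "d1 \<gamma> differentiable (at s)" using gd[OF that] by blast
      from vector_derivative_works[THEN iffD1, OF this] show ?thesis by (simp only: d1_def[of "d1 \<gamma>"])
    qed
      from vd_open(1)[OF lin_vd[OF Lind this] open_greaterThanLessThan that,
          of "d1 (\<lambda>s. L (\<gamma> s))"] db
      have "d1 (d1 (\<lambda>s. L (\<gamma> s))) s = L (d1 (d1 \<gamma>) s)" unfolding d1_def[of "d1 _"] by auto
      also have "\<dots> = \<kappa> s *\<^sub>R L (lcross (d1 \<gamma> s) v)"
        using kap[OF that] linear_cmul[OF Lind] by simp
      finally show ?thesis .
    qed
    show "let \<beta> = (\<lambda>s. vector [linner (\<gamma> s) w, (\<gamma> s)$3] :: real^2);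
              n = (\<lambda>s. vector [linner (lcross (d1 \<gamma> s) v) w, (lcross (d1 \<gamma> s) v)$3] :: real^2)
          in \<forall>s\<in>{a<..<b}.
               linner2 (d1 \<beta> s) (d1 \<beta> s) = 1 \<and>
               linner2 (n s) (n s) = -1 \<and> linner2 (n s) (d1 \<beta> s) = 0 \<and>
               d1 (d1 \<beta>) s = \<kappa> s *\<^sub>R n s \<and> (\<beta> s)$2 > 0 \<and>
               \<kappa> s = - \<alpha> * linner2 (n s) (vector [0, 1]) / (\<beta> s)$2"
      unfolding Let_def beq neq
    proof (intro ballI conjI)
      fix s assume s: "s \<in> {a<..<b}"
      show "linner2 (d1 (\<lambda>s. L (\<gamma> s)) s) (d1 (\<lambda>s. L (\<gamma> s)) s) = 1"
        unfolding db[OF s] Lid using gd[OF s] F0[OF s] by simp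
      show "linner2 (L (lcross (d1 \<gamma> s) v)) (L (lcross (d1 \<gamma> s) v)) = -1"
        unfolding Lid cross_orth2 using sp2[OF s, of 0] unfolding N_def by simp
      show "linner2 (L (lcross (d1 \<gamma> s) v)) (d1 (\<lambda>s. L (\<gamma> s)) s) = 0"
        unfolding db[OF s] Lid cross_orth2 cross_orth1 by simp
      show "d1 (d1 (\<lambda>s. L (\<gamma> s))) s = \<kappa> s *\<^sub>R L (lcross (d1 \<gamma> s) v)" by (rule ddb[OF s])
      have g3: "(\<gamma> s)$3 > 0" using pos[OF s, of 0] unfolding X_def by simp
      then show "(L (\<gamma> s))$2 > 0" unfolding L_def by simp
      have "\<kappa> s = \<alpha> * linner (N s 0) avec / linner (X s 0) avec"
        using pos[OF s, of 0] H[OF s, of 0] by simp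
      then show "\<kappa> s = - \<alpha> * linner2 (L (lcross (d1 \<gamma> s) v)) (vector [0, 1]) / (L (\<gamma> s))$2"
        unfolding L_def linner2_def linner_def avec_def N_def X_def by simp
    qed
  qed
next
  fix \<beta> n :: "real \<Rightarrow> real^2" and \<kappa> :: "real \<Rightarrow> real" and a b :: real
  assume H: "a < b \<and>
      (\<forall>s\<in>{a<..<b}. \<beta> differentiable (at s) \<and> d1 \<beta> differentiable (at s) \<and>
         linner2 (d1 \<beta> s) (d1 \<beta> s) = 1 \<and> (\<beta> s)$2 > 0 \<and>
         linner2 (n s) (n s) = -1 \<and> linner2 (n s) (d1 \<beta> s) = 0 \<and>
         d1 (d1 \<beta>) s = \<kappa> s *\<^sub>R n s \<and> \<kappa> s \<noteq> 0 \<and>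
         \<kappa> s = - \<alpha> * linner2 (n s) (vector [0, 1]) / (\<beta> s)$2)"
  define M where "M = (\<lambda>x::real^2. vector [x$1, 0, x$2] :: real^3)"
  define K where "K = (\<lambda>x::real^2. vector [x$2, 0, x$1] :: real^3)"
  define e2 :: "real^3" where "e2 = vector [0, 1, 0]"
  define X where "X = (\<lambda>s t. M (\<beta> s) + t *\<^sub>R e2)"
  define N where "N = (\<lambda>s (t::real). K (d1 \<beta> s))"
  have Xeq: "(\<lambda>s t. vector [(\<beta> s)$1, 0, (\<beta> s)$2] + t *\<^sub>R vector [0, 1, 0]) = X"
    unfolding X_def M_def e2_def ..
  have hy: "\<And>s. s \<in> {a<..<b} \<Longrightarrow> \<beta> differentiable (at s) \<and> d1 \<beta> differentiable (at s) \<and>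
         linner2 (d1 \<beta> s) (d1 \<beta> s) = 1 \<and> (\<beta> s)$2 > 0 \<and>
         linner2 (n s) (n s) = -1 \<and> linner2 (n s) (d1 \<beta> s) = 0 \<and>
         d1 (d1 \<beta>) s = \<kappa> s *\<^sub>R n s \<and> \<kappa> s \<noteq> 0 \<and>
         \<kappa> s = - \<alpha> * linner2 (n s) (vector [0, 1]) / (\<beta> s)$2"
    using H by blast
  have Md: "linear M" unfolding M_def by (rule linM)
  have Kd: "linear K" unfolding K_def by (rule linK)
  have bd: "(\<beta> has_vector_derivative d1 \<beta> s) (at s)" if "s \<in> {a<..<b}" for s
  proof -
    have "\<beta> differentiable (at s)" using hy[OF that] by blast
    from vector_derivative_works[THEN iffD1, OF this] show ?thesis by (simp only: d1_def)
  qed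
  have bdd: "(d1 \<beta> has_vector_derivative d1 (d1 \<beta>) s) (at s)" if "s \<in> {a<..<b}" for s
  proof -
    have "d1 \<beta> differentiable (at s)" using hy[OF that] by blast
    from vector_derivative_works[THEN iffD1, OF this] show ?thesis by (simp only: d1_def[of "d1 \<beta>"])
  qed
  have Xsd: "((\<lambda>s'. X s' t) has_vector_derivative M (d1 \<beta> s)) (at s)" if "s \<in> {a<..<b}" for s t
  proof -
    have "((\<lambda>s'. M (\<beta> s') + t *\<^sub>R e2) has_vector_derivative M (d1 \<beta> s) + 0) (at s)"
      by (intro has_vector_derivative_add lin_vd[OF Md bd[OF that]]) auto
    then show ?thesis unfolding X_def by simp
  qed
  have Xs: "Xs X s t = M (d1 \<beta> s)" if "s \<in> {a<..<b}" for s t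
    unfolding Xs_def using Xsd[OF that] by (simp add: vector_derivative_at)
  have Xtd: "((\<lambda>t'. X s t') has_vector_derivative e2) (at t)" for s t
  proof -
    have "((\<lambda>t'. M (\<beta> s) + t' *\<^sub>R e2) has_vector_derivative e2) (at t)"
      by (auto intro!: derivative_eq_intros)
    then show ?thesis unfolding X_def by simp
  qed
  have Xt: "Xt X s t = e2" for s t
    unfolding Xt_def using Xtd by (simp add: vector_derivative_at)
  have Xssd: "((\<lambda>s'. Xs X s' t) has_vector_derivative \<kappa> s *\<^sub>R M (n s)) (at s)" if "s \<in> {a<..<b}" for s t
  proof -
    have "((\<lambda>s'. M (d1 \<beta> s')) has_vector_derivative M (d1 (d1 \<beta>) s)) (at s)"
      by (rule lin_vd[OF Md bdd[OF that]])
    then have "((\<lambda>s'. M (d1 \<beta> s')) has_vector_derivative \<kappa> s *\<^sub>R M (n s)) (at s)"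
    proof -
      have "d1 (d1 \<beta>) s = \<kappa> s *\<^sub>R n s" using hy[OF that] by blast
      then show ?thesis using \<open>((\<lambda>s'. M (d1 \<beta> s')) has_vector_derivative M (d1 (d1 \<beta>) s)) (at s)\<close>
        linear_cmul[OF Md] by simp
    qed
    from has_vector_derivative_transform_within_open[OF this open_greaterThanLessThan that, of "\<lambda>s'. Xs X s' t"]
    show ?thesis using Xs by auto
  qed
  have Xss: "Xss X s t = \<kappa> s *\<^sub>R M (n s)" if "s \<in> {a<..<b}" for s t
    unfolding Xss_def using Xssd[OF that] by (simp add: vector_derivative_at)
  have Xst: "Xst X s t = 0" if "s \<in> {a<..<b}" for s t
    unfolding Xst_def Xs[OF that] by (simp add: vector_derivative_at)
  have Xtt: "Xtt X s t = 0" for s t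
    unfolding Xtt_def Xt by (simp add: vector_derivative_at)
  have key: "(n s)$2 * ((d1 \<beta> s)$1 * (n s)$2 - (d1 \<beta> s)$2 * (n s)$1) = (d1 \<beta> s)$1"
    if "s \<in> {a<..<b}" for s
  proof -
    define p1 where "p1 = (d1 \<beta> s)$1"
    define p2 where "p2 = (d1 \<beta> s)$2"
    define n1 where "n1 = (n s)$1"
    define n2 where "n2 = (n s)$2"
    have e1: "p1*p1 - p2*p2 = 1" and e2: "n1*n1 - n2*n2 = -1" and e3: "n1*p1 - n2*p2 = 0"
      using hy[OF that] unfolding linner2_def p1_def p2_def n1_def n2_def by auto
    have "p1 * (n2 * (p1 * n2 - p2 * n1)) = n2*n2" 
    proof -
      have "p1 * (n2 * (p1 * n2 - p2 * n1)) = p1*p1*n2*n2 - p2*n2*(n1*p1)" by (simp add: algebra_simps)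
      also have "\<dots> = n2*n2*(p1*p1 - p2*p2)" using e3 by (simp add: algebra_simps)
      finally show ?thesis using e1 by simp
    qed
    moreover have "n2*n2 = p1*p1"
    proof -
      have a1: "n1*n1 = n2*n2 - 1" using e2 by simp
      have a2: "p2*p2 = p1*p1 - 1" using e1 by simp
      have "(n1*p1)*(n1*p1) = (n2*p2)*(n2*p2)" using e3 by simp
      then have "(n1*n1)*(p1*p1) = (n2*n2)*(p2*p2)" by (simp only: mult_ac)
      then have "(n2*n2 - 1)*(p1*p1) = (n2*n2)*(p1*p1 - 1)" by (simp only: a1 a2)
      then show ?thesis by (simp add: algebra_simps)
    qed
    moreover have "p1 \<noteq> 0"
    proof
      assume "p1 = 0"
      then have "- (p2*p2) = 1" using e1 by simp
      moreover have "p2*p2 \<ge> 0" by simp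
      ultimately show False by linarith
    qed
    ultimately have "p1 * (n2 * (p1 * n2 - p2 * n1)) = p1 * p1" by simp
    then show ?thesis using \<open>p1 \<noteq> 0\<close> unfolding p1_def p2_def n1_def n2_def by simp
  qed
  have cont: "continuous_on ({a<..<b} \<times> UNIV) (\<lambda>(s,t). N s t)"
  proof -
    have c1: "continuous_on {a<..<b} (\<lambda>s. K (d1 \<beta> s))"
    proof (rule continuous_at_imp_continuous_on, rule ballI)
      fix s assume s: "s \<in> {a<..<b}"
      show "isCont (\<lambda>s. K (d1 \<beta> s)) s"
        by (rule differentiable_imp_continuous_within[OF differentiableI_vector[OF lin_vd[OF Kd bdd[OF s]]]])
    qed
    have "continuous_on ({a<..<b} \<times> UNIV) ((\<lambda>s. K (d1 \<beta> s)) \<circ> fst)"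
      by (rule continuous_on_compose[OF continuous_on_fst[OF continuous_on_id]]) (simp add: c1 fst_image_times)
    then show ?thesis unfolding N_def by (simp add: case_prod_beta' o_def)
  qed
  show "\<exists>N. alpha_singular_maximal \<alpha>
              (\<lambda>s t. vector [(\<beta> s)$1, 0, (\<beta> s)$2] + t *\<^sub>R vector [0, 1, 0]) N
              ({a<..<b} \<times> UNIV)"
    unfolding Xeq
  proof (intro exI[of _ N])
    show "alpha_singular_maximal \<alpha> X N ({a<..<b} \<times> UNIV)"
      unfolding alpha_singular_maximal_def spacelike_surface_def
    proof (intro conjI ballI cont open_Times open_greaterThanLessThan open_UNIV)
      fix p assume "p \<in> {a<..<b} \<times> (UNIV::real set)"
      then obtain s t where p: "p = (s,t)" and s: "s \<in> {a<..<b}" by auto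
      have h1: "linner2 (d1 \<beta> s) (d1 \<beta> s) = 1" and b2: "(\<beta> s)$2 > 0"
        and h3: "linner2 (n s) (n s) = -1" using hy[OF s] by blast+
      have E: "linner (Xs X s t) (Xs X s t) = 1" using h1 unfolding Xs[OF s] M_def linner_def linner2_def by simp
      have G: "linner (Xt X s t) (Xt X s t) = 1" unfolding Xt e2_def linner_def by simp
      have F: "linner (Xs X s t) (Xt X s t) = 0" unfolding Xt Xs[OF s] e2_def M_def linner_def by simp
      have NN: "linner (N s t) (N s t) = -1" using h1 unfolding N_def K_def linner_def linner2_def by simp
      have NXs: "linner (N s t) (Xs X s t) = 0" unfolding N_def K_def Xs[OF s] M_def linner_def by simp
      have NXt: "linner (N s t) (Xt X s t) = 0" unfolding N_def K_def Xt e2_def linner_def by simp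
      have mc: "mean_curv X N s t = - \<kappa> s * ((d1 \<beta> s)$2 * (n s)$1 - (d1 \<beta> s)$1 * (n s)$2)"
      proof -
        have ee: "linner (N s t) (Xss X s t) = \<kappa> s * ((d1 \<beta> s)$2 * (n s)$1 - (d1 \<beta> s)$1 * (n s)$2)"
          unfolding Xss[OF s] N_def K_def M_def linner_def by (simp add: algebra_simps)
        have ff: "linner (N s t) (Xst X s t) = 0" unfolding Xst[OF s] by (simp add: linner_def)
        have gg: "linner (N s t) (Xtt X s t) = 0" unfolding Xtt by (simp add: linner_def)
        show ?thesis unfolding mean_curv_def Let_def E F G ee ff gg by simp
      qed
      have kk0: "\<kappa> s = - \<alpha> * linner2 (n s) (vector [0, 1]) / (\<beta> s)$2" using hy[OF s] by blast
      have l2: "linner2 (n s) (vector [0, 1]) = - (n s)$2" by (simp add: linner2_def)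
      have kk: "\<kappa> s = \<alpha> * (n s)$2 / (\<beta> s)$2" using kk0 unfolding l2 by simp
      have "mean_curv X N s t = \<alpha> * linner (N s t) avec / linner (X s t) avec"
      proof -
        have "mean_curv X N s t = \<alpha> * ((n s)$2 * ((d1 \<beta> s)$1 * (n s)$2 - (d1 \<beta> s)$2 * (n s)$1)) / (\<beta> s)$2"
          unfolding mc kk using b2 by (simp add: field_simps)
        also have "\<dots> = \<alpha> * (d1 \<beta> s)$1 / (\<beta> s)$2" using key[OF s] by simp
        also have "\<dots> = \<alpha> * linner (N s t) avec / linner (X s t) avec"
          unfolding N_def K_def X_def M_def e2_def linner_def avec_def by simp
        finally show ?thesis .
      qed
      moreover have "(X s t)$3 > 0" using b2 unfolding X_def M_def e2_def by simp
      moreover have "(\<lambda>s'. X s' t) differentiable (at s)" using Xsd[OF s] by (rule differentiableI_vector)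
      moreover have "(\<lambda>t'. X s t') differentiable (at t)" using Xtd by (rule differentiableI_vector)
      moreover have "(\<lambda>s'. Xs X s' t) differentiable (at s)" using Xssd[OF s] by (rule differentiableI_vector)
      moreover have "(\<lambda>t'. Xs X s t') differentiable (at t)" unfolding Xs[OF s] by simp
      moreover have "(\<lambda>t'. Xt X s t') differentiable (at t)" unfolding Xt by simp
      ultimately show "case p of (s, t) \<Rightarrow> (\<lambda>s'. X s' t) differentiable at s \<and>
          (\<lambda>t'. X s t') differentiable at t \<and>
          (\<lambda>s'. Xs X s' t) differentiable at s \<and>
          (\<lambda>t'. Xs X s t') differentiable at t \<and>
          (\<lambda>t'. Xt X s t') differentiable at t \<and>
          0 < linner (Xs X s t) (Xs X s t) \<and>
          0 < linner (Xt X s t) (Xt X s t) \<and>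
          0 < linner (Xs X s t) (Xs X s t) * linner (Xt X s t) (Xt X s t) - (linner (Xs X s t) (Xt X s t))\<^sup>2 \<and>
          linner (N s t) (N s t) = - 1 \<and> linner (N s t) (Xs X s t) = 0 \<and> linner (N s t) (Xt X s t) = 0"
        and "case p of (s, t) \<Rightarrow> 0 < X s t $ 3 \<and> mean_curv X N s t = \<alpha> * linner (N s t) avec / linner (X s t) avec"
        unfolding p using E F G NN NXs NXt by auto
    qed
  qed
qed

end
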